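(* Let $X_1,X_2,\dots$ be independent identically distributed random variables, $S_n=X_1+\dots+X_n$, $\{\tau_n\}$ a nonnegative sequence satisfying Condition A, and $\{a_n\}$ a non-decreasing strictly positive sequence tending to $\infty$. Suppose there exist finite constants $\theta\ge1$, $C>0$, $N\ge2$ with $\frac{a_n^{3\theta}}{n^{\theta-1}}\sum_{k=n}^\infty\frac{k^\theta\tau_k}{a_k^{3\theta}}\le C\sum_{k=1}^{n-1}k\tau_k$ for all $n\ge N$, and if $\theta>1$ that $\liminf_{n\to\infty}\inf_{k\ge n}\frac{a_k^3}{ka_n^3}\sum_{j=1}^{n-1}j\tau_j>0$. If $\sum_{n=1}^\infty\tau_nP(|S_n|\ge\varepsilon a_n)<\infty$ for all $\varepsilon>0$, then: (i) there is a sequence $\{\mu_n\}$ with $\mu_n$ a median of $S_n$ for each $n$ such that for every $\varepsilon>0$, $\sum_{n:\,|\mu_n|>\varepsilon a_n}\tau_n<\infty$; and (ii) $\sum_{n=1}^\infty n\tau_nP(|X_1|\ge\varepsilon a_n)<\infty$ for all $\varepsilon>0$.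
   Context: A nonnegative sequence $\{\tau_n\}$ satisfies Condition A if for every nonnegative non-increasing sequence $\{c_n\}$ with $\sum_n\tau_n\min(nc_n,1)<\infty$ we also have $\sum_n\tau_nnc_n<\infty$. *)

theory Defs
  imports "HOL-Probability.Probability"
begin

text \<open>Condition A for a (nonnegative) sequence tau indexed by n = 1,2,...
  (the n = 0 term of each series is 0, so summing over all nat is harmless).\<close>
definition condition_A :: "(nat \<Rightarrow> real) \<Rightarrow> bool" where
  "condition_A \<tau> \<longleftrightarrow>
     (\<forall>c :: nat \<Rightarrow> real. (\<forall>n. c n \<ge> 0) \<and> antimono c \<and>
        summable (\<lambda>n. \<tau> n * min (real n * c n) 1)
        \<longrightarrow> summable (\<lambda>n. \<tau> n * (real n * c n)))"

definition is_median :: "'a measure \<Rightarrow> ('a \<Rightarrow> real) \<Rightarrow> real \<Rightarrow> bool" where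
  "is_median M Y m \<longleftrightarrow>
     measure M {x \<in> space M. Y x \<le> m} \<ge> 1/2 \<and> measure M {x \<in> space M. Y x \<ge> m} \<ge> 1/2"

end

theory Submission
  imports Defs
begin

lemma (in prob_space) median_exists:
  fixes Y :: "'a \<Rightarrow> real" assumes Y: "Y \<in> borel_measurable M"
  shows "\<exists>m. is_median M Y m"
proof -
  let ?D = "distr M borel Y"
  interpret D: real_distribution ?D using Y by simp
  define F where "F = cdf ?D"
  have Fm: "F t = prob {x\<in>space M. Y x \<le> t}" for t
    unfolding F_def cdf_def using Y by (subst measure_distr) (auto intro!: arg_cong[where f=prob])
  have mono: "s \<le> t \<Longrightarrow> F s \<le> F t" for s t unfolding F_def by (rule D.cdf_nondecreasing)
  have "eventually (\<lambda>t. F t > 1/2) at_top"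
    using D.cdf_lim_at_top_prob unfolding F_def by (rule order_tendstoD) simp
  then obtain t0 where t0: "F t0 > 1/2" by (auto simp: eventually_at_top_linorder)
  have "eventually (\<lambda>t. F t < 1/2) at_bot"
    using D.cdf_lim_at_bot unfolding F_def by (rule order_tendstoD) simp
  then obtain b where b: "\<And>t. t \<le> b \<Longrightarrow> F t < 1/2" by (auto simp: eventually_at_bot_linorder)
  define S where "S = {t. F t \<ge> 1/2}"
  have bdd: "bdd_below S"
  proof (rule bdd_belowI)
    fix t assume "t \<in> S" then show "b \<le> t" using b[of t] by (force simp: S_def)
  qed
  have "t0 \<in> S" using t0 by (simp add: S_def)
  then have ne: "S \<noteq> {}" by auto
  define m where "m = Inf S"
  have lim: "(F \<longlongrightarrow> F m) (at_right m)"
    using D.cdf_is_right_cont[of m] unfolding F_def continuous_within by simp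
  have ev: "eventually (\<lambda>t. 1/2 \<le> F t) (at_right m)"
    using eventually_at_right_less[of m]
  proof (rule eventually_mono)
    fix t assume "m < t"
    then obtain s where "s \<in> S" "s < t" using cInf_less_iff[OF ne bdd] m_def by auto
    then show "1/2 \<le> F t" using mono[of s t] by (auto simp: S_def)
  qed
  have F1: "1/2 \<le> F m" by (rule tendsto_lowerbound[OF lim ev trivial_limit_at_right_real])
  have lim2: "(F \<longlongrightarrow> measure ?D {..<m}) (at_left m)"
    unfolding F_def by (rule D.cdf_at_left)
  have "eventually (\<lambda>t. t \<in> {m - 1<..<m}) (at_left m)"
    using eventually_at_left_real[of "m - 1" m] by simp
  then have ev2: "eventually (\<lambda>t. F t \<le> 1/2) (at_left m)"
  proof (rule eventually_mono)
    fix t assume "t \<in> {m - 1<..<m}"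
    then have "t < m" by simp
    then have "t \<notin> S" using cInf_lower[OF _ bdd, of t] m_def by force
    then show "F t \<le> 1/2" by (auto simp: S_def)
  qed
  have F2: "measure ?D {..<m} \<le> 1/2" by (rule tendsto_upperbound[OF lim2 ev2 trivial_limit_at_left_real])
  have "measure ?D {m..} = 1 - measure ?D {..<m}"
    using D.prob_compl[of "{..<m}"] by (auto simp: Compl_eq_Diff_UNIV[symmetric] not_less)
  moreover have "measure ?D {m..} = prob {x\<in>space M. Y x \<ge> m}"
    using Y by (subst measure_distr) (auto intro!: arg_cong[where f=prob])
  ultimately have "prob {x\<in>space M. Y x \<ge> m} \<ge> 1/2" using F2 by simp
  then show ?thesis using F1 Fm unfolding is_median_def by auto
qed


lemma (in prob_space) bounded_half:
  fixes Y :: "'a \<Rightarrow> real" assumes Y: "Y \<in> borel_measurable M"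
  shows "\<exists>m\<ge>0. prob {x\<in>space M. \<bar>Y x\<bar> \<le> m} \<ge> 1/2"
proof -
  let ?D = "distr M borel (\<lambda>x. \<bar>Y x\<bar>)"
  interpret D: real_distribution ?D using Y by simp
  have "eventually (\<lambda>t. cdf ?D t > 1/2) at_top"
    using D.cdf_lim_at_top_prob by (rule order_tendstoD) simp
  then obtain t0 where t0: "\<And>t. t \<ge> t0 \<Longrightarrow> cdf ?D t > 1/2" by (auto simp: eventually_at_top_linorder)
  let ?m = "max t0 0"
  have "cdf ?D ?m = prob {x\<in>space M. \<bar>Y x\<bar> \<le> ?m}"
    unfolding cdf_def using Y by (subst measure_distr) (auto intro!: arg_cong[where f=prob])
  then show ?thesis using t0[of ?m] by (intro exI[of _ ?m]) auto
qed

lemma gauss_aux: "(\<Sum>k=1..r. real (k - 1)) = real r * (real r - 1) / 2"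
  by (induction r) (auto simp: field_simps)

lemma (in prob_space) bonf:
  fixes r :: nat
  assumes A: "\<And>k. 1 \<le> k \<Longrightarrow> A k \<in> events"
  shows "(\<Sum>k=1..r. prob (A k)) - (\<Sum>k=1..r. \<Sum>j=1..<k. prob (A j \<inter> A k)) \<le> prob (\<Union>k\<in>{1..r}. A k)"
proof (induction r)
  case 0 show ?case by simp
next
  case (Suc r)
  let ?U = "\<Union>k\<in>{1..r}. A k"
  let ?B = "A (Suc r)"
  have U: "?U \<in> events" using A by auto
  have eq: "(\<Union>k\<in>{1..Suc r}. A k) = ?U \<union> ?B" by (simp add: atLeastAtMostSuc_conv Un_commute)
  have un: "prob (?U \<union> ?B) = prob ?U + prob ?B - prob (?U \<inter> ?B)"
    using U A by (intro measure_Un3) (auto simp: fmeasurable_eq_sets)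
  have UB: "?U \<inter> ?B = (\<Union>j\<in>{1..r}. A j \<inter> ?B)" by auto
  have "prob (\<Union>j\<in>{1..r}. A j \<inter> ?B) \<le> (\<Sum>j\<in>{1..r}. prob (A j \<inter> ?B))"
    by (rule measure_UNION_le) (use A in auto)
  then have "prob (?U \<inter> ?B) \<le> (\<Sum>j\<in>{1..r}. prob (A j \<inter> ?B))"
    by (simp only: UB)
  moreover have "(\<Sum>k=1..Suc r. prob (A k)) = (\<Sum>k=1..r. prob (A k)) + prob ?B"
    by (simp add: sum.cl_ivl_Suc)
  moreover have "(\<Sum>k=1..Suc r. \<Sum>j=1..<k. prob (A j \<inter> A k))
      = (\<Sum>k=1..r. \<Sum>j=1..<k. prob (A j \<inter> A k)) + (\<Sum>j\<in>{1..r}. prob (A j \<inter> ?B))"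
    by (simp add: sum.cl_ivl_Suc atLeastLessThanSuc_atLeastAtMost)
  moreover have "prob (\<Union>k\<in>{1..Suc r}. A k) = prob ?U + prob ?B - prob (?U \<inter> ?B)"
    unfolding eq by (rule un)
  ultimately show ?case using Suc.IH by linarith
qed

lemma (in prob_space) key:
  fixes X :: "nat \<Rightarrow> 'a \<Rightarrow> real" and n :: nat and m t :: real
  assumes indep: "indep_vars (\<lambda>_. borel) X {1..}"
    and ident: "\<And>i. i \<ge> 1 \<Longrightarrow> distr M borel (X i) = distr M borel (X 1)"
    and m: "prob {x\<in>space M. \<bar>X 1 x\<bar> \<le> m} \<ge> 1/2" and mt: "m \<le> t"
  shows "min (real n * prob {x\<in>space M. \<bar>X 1 x\<bar> \<ge> 3*t}) 1
          \<le> 12 * prob {x\<in>space M. \<bar>\<Sum>i=1..n. X i x\<bar> \<ge> t}"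
proof -
  define p where "p = prob {x\<in>space M. \<bar>X 1 x\<bar> \<ge> 3*t}"
  define q where "q = prob {x\<in>space M. \<bar>\<Sum>i=1..n. X i x\<bar> \<ge> t}"
  have Xm: "\<And>i. i \<ge> 1 \<Longrightarrow> X i \<in> borel_measurable M" using indep unfolding indep_vars_def by auto
  have same: "prob (X i -` B \<inter> space M) = prob (X 1 -` B \<inter> space M)" if "i \<ge> 1" "B \<in> sets borel" for i B
  proof -
    have "prob (X i -` B \<inter> space M) = measure (distr M borel (X i)) B"
      using that Xm by (simp add: measure_distr)
    also have "\<dots> = measure (distr M borel (X 1)) B" by (simp only: ident[OF that(1)])
    also have "\<dots> = prob (X 1 -` B \<inter> space M)" using that Xm by (simp add: measure_distr)
    finally show ?thesis .
  qed
  have pk: "prob {x\<in>space M. \<bar>X k x\<bar> \<ge> 3*t} = p" if "k \<ge> 1" for k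
  proof -
    have "{y::real. 3*t \<le> \<bar>y\<bar>} \<in> sets borel" by measurable
    then show ?thesis using same[of k "{y. 3*t \<le> \<bar>y\<bar>}"] that unfolding p_def
      by (simp add: vimage_def Int_def conj_commute)
  qed
  have mk: "prob {x\<in>space M. \<bar>X k x\<bar> \<le> m} \<ge> 1/2" if "k \<ge> 1" for k
  proof -
    have "{y::real. \<bar>y\<bar> \<le> m} \<in> sets borel" by measurable
    then show ?thesis using same[of k "{y. \<bar>y\<bar> \<le> m}"] that m
      by (simp add: vimage_def Int_def conj_commute)
  qed
  define R where "R k x = (\<Sum>i\<in>{1..n}-{k}. X i x)" for k x
  have SR: "(\<Sum>i=1..n. X i x) = X k x + R k x" if "k \<in> {1..n}" for k x
    unfolding R_def using that by (simp add: sum.remove)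
  have indR: "indep_var borel (X k) borel (R k)" if "k \<in> {1..n}" for k
  proof -
    have "indep_vars (\<lambda>_. borel) X (insert k ({1..n}-{k}))"
      by (rule indep_vars_subset[OF indep]) (use that in auto)
    from indep_vars_sum[OF _ _ this] show ?thesis unfolding R_def[abs_def] by simp
  qed
  have ind2: "indep_var borel (X k) borel (X j)" if "k \<in> {1..n}" "j \<in> {1..n}" "j \<noteq> k" for j k
  proof -
    have "indep_vars (\<lambda>_. borel) X (insert k {j})"
      by (rule indep_vars_subset[OF indep]) (use that in auto)
    from indep_vars_sum[OF _ _ this] that show ?thesis by simp
  qed
  have Sm[measurable]: "(\<lambda>x. \<Sum>i=1..n. X i x) \<in> borel_measurable M"
    using Xm by (intro borel_measurable_sum) auto
  have Rm[measurable]: "R k \<in> borel_measurable M" for k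
    unfolding R_def[abs_def] using Xm by (intro borel_measurable_sum) auto
  define A where "A k = {x\<in>space M. \<bar>X k x\<bar> \<ge> 3*t \<and> \<bar>R k x\<bar> < 2*t}" for k
  have L1: "prob {x\<in>space M. \<bar>R k x\<bar> \<ge> 2*t} \<le> 2*q" if k: "k \<in> {1..n}" for k
  proof -
    have [measurable]: "X k \<in> borel_measurable M" using Xm k by auto
    have "prob {x\<in>space M. X k x \<in> {y. \<bar>y\<bar> \<le> m} \<and> R k x \<in> {y. 2*t \<le> \<bar>y\<bar>}}
        = prob {x\<in>space M. X k x \<in> {y. \<bar>y\<bar> \<le> m}} * prob {x\<in>space M. R k x \<in> {y. 2*t \<le> \<bar>y\<bar>}}"
      by (rule prob_indep_random_variable[OF indR[OF k]]) measurable
    moreover have "prob {x\<in>space M. X k x \<in> {y. \<bar>y\<bar> \<le> m} \<and> R k x \<in> {y. 2*t \<le> \<bar>y\<bar>}} \<le> q"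
      unfolding q_def
    proof (rule finite_measure_mono)
      show "{x \<in> space M. \<bar>\<Sum>i = 1..n. X i x\<bar> \<ge> t} \<in> events" by measurable
      show "{x\<in>space M. X k x \<in> {y. \<bar>y\<bar> \<le> m} \<and> R k x \<in> {y. 2*t \<le> \<bar>y\<bar>}} \<subseteq> {x \<in> space M. \<bar>\<Sum>i = 1..n. X i x\<bar> \<ge> t}"
        using SR[OF k] mt by auto
    qed
    ultimately have "prob {x\<in>space M. \<bar>X k x\<bar> \<le> m} * prob {x\<in>space M. \<bar>R k x\<bar> \<ge> 2*t} \<le> q"
      by simp
    moreover have "prob {x\<in>space M. \<bar>X k x\<bar> \<le> m} \<ge> 1/2" using mk k by auto
    ultimately have "1/2 * prob {x\<in>space M. \<bar>R k x\<bar> \<ge> 2*t} \<le> q"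
      using mult_right_mono[of "1/2" "prob {x\<in>space M. \<bar>X k x\<bar> \<le> m}" "prob {x\<in>space M. \<bar>R k x\<bar> \<ge> 2*t}"]
      by simp
    then show ?thesis by simp
  qed
  have Aev: "A k \<in> events" if "k \<ge> 1" for k
  proof -
    have [measurable]: "X k \<in> borel_measurable M" using Xm that by auto
    show ?thesis unfolding A_def by measurable
  qed
  have L2: "prob (A k) \<ge> p * (1 - 2*q)" if k: "k \<in> {1..n}" for k
  proof -
    have [measurable]: "X k \<in> borel_measurable M" using Xm k by auto
    have "prob (A k) = prob {x\<in>space M. X k x \<in> {y. 3*t \<le> \<bar>y\<bar>} \<and> R k x \<in> {y. \<bar>y\<bar> < 2*t}}"
      unfolding A_def by simp
    also have "\<dots> = prob {x\<in>space M. X k x \<in> {y. 3*t \<le> \<bar>y\<bar>}} * prob {x\<in>space M. R k x \<in> {y. \<bar>y\<bar> < 2*t}}"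
      by (rule prob_indep_random_variable[OF indR[OF k]]) measurable
    also have "prob {x\<in>space M. X k x \<in> {y. 3*t \<le> \<bar>y\<bar>}} = p" using pk k by simp
    also have "prob {x\<in>space M. R k x \<in> {y. \<bar>y\<bar> < 2*t}} = 1 - prob {x\<in>space M. \<bar>R k x\<bar> \<ge> 2*t}"
    proof -
      have "{x\<in>space M. R k x \<in> {y. \<bar>y\<bar> < 2*t}} = space M - {x\<in>space M. \<bar>R k x\<bar> \<ge> 2*t}" by auto
      moreover have "{x\<in>space M. \<bar>R k x\<bar> \<ge> 2*t} \<in> events" by measurable
      ultimately show ?thesis using prob_compl by simp
    qed
    finally have "prob (A k) = p * (1 - prob {x\<in>space M. \<bar>R k x\<bar> \<ge> 2*t})" .
    moreover have "p \<ge> 0" unfolding p_def by simp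
    ultimately show ?thesis using L1[OF k] by (simp add: mult_left_mono)
  qed
  have L3: "prob (A j \<inter> A k) \<le> p * p" if "k \<in> {1..n}" "j \<in> {1..n}" "j \<noteq> k" for j k
  proof -
    have [measurable]: "X k \<in> borel_measurable M" "X j \<in> borel_measurable M" using Xm that by auto
    have "prob (A j \<inter> A k) \<le> prob {x\<in>space M. X k x \<in> {y. 3*t \<le> \<bar>y\<bar>} \<and> X j x \<in> {y. 3*t \<le> \<bar>y\<bar>}}"
      by (rule finite_measure_mono) (auto simp: A_def)
    also have "\<dots> = prob {x\<in>space M. X k x \<in> {y. 3*t \<le> \<bar>y\<bar>}} * prob {x\<in>space M. X j x \<in> {y. 3*t \<le> \<bar>y\<bar>}}"
      by (rule prob_indep_random_variable[OF ind2[OF that]]) measurable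
    also have "\<dots> = p * p" using pk that by simp
    finally show ?thesis .
  qed
  have Aq: "(\<Union>k\<in>{1..r}. A k) \<subseteq> {x\<in>space M. \<bar>\<Sum>i=1..n. X i x\<bar> \<ge> t}" if "r \<le> n" for r
  proof
    fix x assume "x \<in> (\<Union>k\<in>{1..r}. A k)"
    then obtain k where k: "k \<in> {1..r}" "x \<in> A k" by auto
    then have "k \<in> {1..n}" using that by auto
    then show "x \<in> {x\<in>space M. \<bar>\<Sum>i=1..n. X i x\<bar> \<ge> t}" using k SR[of k x] unfolding A_def by auto
  qed
  have qn: "q \<ge> 0" unfolding q_def by simp
  have pn: "p \<ge> 0" "p \<le> 1" unfolding p_def by auto
  have main: "real r * p \<le> 6 * q" if r: "r \<le> n" "real r * p \<le> 1" for r
  proof -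
    have b: "(\<Sum>k=1..r. prob (A k)) - (\<Sum>k=1..r. \<Sum>j=1..<k. prob (A j \<inter> A k)) \<le> prob (\<Union>k\<in>{1..r}. A k)"
      by (rule bonf) (rule Aev)
    have "prob (\<Union>k\<in>{1..r}. A k) \<le> q" unfolding q_def
      by (rule finite_measure_mono[OF Aq[OF r(1)]]) measurable
    moreover have "(\<Sum>k=1..r. prob (A k)) \<ge> (\<Sum>k=1..r. p * (1 - 2*q))"
      by (rule sum_mono) (use L2 r in auto)
    moreover have "(\<Sum>k=1..r. \<Sum>j=1..<k. prob (A j \<inter> A k)) \<le> (\<Sum>k=1..r. \<Sum>j=1..<k. p * p)"
      by (intro sum_mono) (use L3 r in auto)
    moreover have "(\<Sum>k=1..r. \<Sum>j=1..<k. p * p) = p * p * (\<Sum>k=1..r. real (k - 1))"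
      by (simp add: sum_distrib_left mult_ac)
    moreover have "(\<Sum>k=1..r. p * (1 - 2*q)) = real r * (p * (1 - 2*q))" by simp
    ultimately have ineq: "real r * (p * (1 - 2*q)) - p * p * (real r * (real r - 1) / 2) \<le> q"
      using b arg_cong[OF gauss_aux[of r], of "\<lambda>z. p * p * z"] by linarith
    define u where "u = real r * p"
    have u: "0 \<le> u" "u \<le> 1" using pn r unfolding u_def by auto
    have "(real r - 1) * p \<le> real r * p" using pn by (intro mult_right_mono) auto
    then have "(real r - 1) * p \<le> 1" using r by linarith
    then have "u * ((real r - 1) * p) \<le> u" using u by (simp add: mult_left_le)
    moreover have "p * p * (real r * (real r - 1) / 2) = u * ((real r - 1) * p) / 2"
      unfolding u_def by (simp add: algebra_simps)
    moreover have "real r * (p * (1 - 2*q)) = u - 2 * (u * q)" unfolding u_def by (simp add: algebra_simps)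
    moreover have "u * q \<le> q" using u qn by (simp add: mult_left_le_one_le)
    ultimately show ?thesis using ineq unfolding u_def by linarith
  qed
  show ?thesis
  proof (cases "real n * p \<le> 1")
    case True
    then have "min (real n * p) 1 \<le> 12 * q" using main[of n] qn by simp
    then show ?thesis unfolding p_def q_def .
  next
    case False
    then have p0: "p > 0" using pn by (cases "p = 0") auto
    define r where "r = nat \<lfloor>1/p\<rfloor>"
    have fl: "real r = of_int \<lfloor>1/p\<rfloor>" unfolding r_def using p0 by simp
    have r1: "real r \<le> 1/p" using fl by linarith
    have r2: "real r > 1/p - 1" using fl by linarith
    have rp: "real r * p \<le> 1" using r1 p0 by (simp add: field_simps)
    have "1/p < real n" using False p0 by (simp add: field_simps)
    then have rn: "r \<le> n" using r1 by linarith
    have "real r * p \<ge> 1/2"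
    proof (cases "p \<ge> 1/2")
      case True
      have "1/p \<ge> 1" using pn p0 by (simp add: field_simps)
      then have "\<lfloor>1/p\<rfloor> \<ge> 1" by (simp add: le_floor_iff)
      then have "real r \<ge> 1" using fl by simp
      then have "1 * p \<le> real r * p" using p0 by (intro mult_right_mono) auto
      then show ?thesis using True by linarith
    next
      case False
      have "real r * p > (1/p - 1) * p" using r2 p0 by (simp add: mult_strict_right_mono)
      moreover have "(1/p - 1) * p = 1 - p" using p0 by (simp add: field_simps)
      ultimately show ?thesis using False by linarith
    qed
    then have "1 \<le> 12 * q" using main[OF rn rp] by linarith
    then show ?thesis unfolding q_def p_def by simp
  qed
qed


theorem lemma2:
  fixes M :: "'a measure" and X :: "nat \<Rightarrow> 'a \<Rightarrow> real"
    and \<tau> a :: "nat \<Rightarrow> real" and \<theta> C :: real and N :: nat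
  assumes P: "prob_space M"
    and indep: "prob_space.indep_vars M (\<lambda>_. borel) X {1..}"
    and ident: "\<And>i. i \<ge> 1 \<Longrightarrow> distr M borel (X i) = distr M borel (X 1)"
    and tau_nonneg: "\<And>n. \<tau> n \<ge> 0"
    and tau_A: "condition_A \<tau>"
    and a_mono: "\<And>m n. 1 \<le> m \<Longrightarrow> m \<le> n \<Longrightarrow> a m \<le> a n"
    and a_pos: "\<And>n. n \<ge> 1 \<Longrightarrow> a n > 0"
    and a_inf: "filterlim a at_top sequentially"
    and theta: "\<theta> \<ge> 1" and Cpos: "C > 0" and N2: "N \<ge> 2"
    and tail: "\<And>n. n \<ge> N \<Longrightarrow>
        summable (\<lambda>k. real (k + n) powr \<theta> * \<tau> (k + n) / a (k + n) powr (3 * \<theta>)) \<and>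
        a n powr (3 * \<theta>) / real n powr (\<theta> - 1) *
          (\<Sum>k. real (k + n) powr \<theta> * \<tau> (k + n) / a (k + n) powr (3 * \<theta>))
        \<le> C * (\<Sum>k = 1..n - 1. real k * \<tau> k)"
    and liminf_cond: "\<theta> > 1 \<Longrightarrow>
        liminf (\<lambda>n. (INF k\<in>{n..}. ereal (a k ^ 3 / (real k * a n ^ 3)))
                     * ereal (\<Sum>j = 1..n - 1. real j * \<tau> j)) > 0"
    and hyp: "\<And>\<epsilon>. \<epsilon> > 0 \<Longrightarrow>
        summable (\<lambda>n. \<tau> n * measure M {x \<in> space M. \<bar>\<Sum>i = 1..n. X i x\<bar> \<ge> \<epsilon> * a n})"
  shows "(\<exists>\<mu> :: nat \<Rightarrow> real.
            (\<forall>n \<ge> 1. is_median M (\<lambda>x. \<Sum>i = 1..n. X i x) (\<mu> n)) \<and>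
            (\<forall>\<epsilon> > 0. summable (\<lambda>n. if n \<ge> 1 \<and> \<bar>\<mu> n\<bar> > \<epsilon> * a n then \<tau> n else 0)))
       \<and> (\<forall>\<epsilon> > 0. summable (\<lambda>n. real n * \<tau> n * measure M {x \<in> space M. \<bar>X 1 x\<bar> \<ge> \<epsilon> * a n}))"
proof -
  interpret prob_space M by (rule P)
  have Xm: "\<And>i. i \<ge> 1 \<Longrightarrow> X i \<in> borel_measurable M" using indep unfolding indep_vars_def by auto
  have Sm: "(\<lambda>x. \<Sum>i=1..n. X i x) \<in> borel_measurable M" for n
    using Xm by (intro borel_measurable_sum) auto
  define \<mu> where "\<mu> n = (SOME m. is_median M (\<lambda>x. \<Sum>i=1..n. X i x) m)" for n
  have med: "is_median M (\<lambda>x. \<Sum>i=1..n. X i x) (\<mu> n)" for n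
    unfolding \<mu>_def by (rule someI_ex) (rule median_exists[OF Sm])
  have part1: "\<forall>\<epsilon>>0. summable (\<lambda>n. if n \<ge> 1 \<and> \<bar>\<mu> n\<bar> > \<epsilon> * a n then \<tau> n else 0)"
  proof (intro allI impI)
    fix \<epsilon> :: real assume \<epsilon>: "\<epsilon> > 0"
    show "summable (\<lambda>n. if n \<ge> 1 \<and> \<bar>\<mu> n\<bar> > \<epsilon> * a n then \<tau> n else 0)"
    proof (rule summable_comparison_test_ev[OF _ summable_mult[OF hyp[OF \<epsilon>], of 2]])
      show "eventually (\<lambda>n. norm (if n \<ge> 1 \<and> \<bar>\<mu> n\<bar> > \<epsilon> * a n then \<tau> n else 0)
        \<le> 2 * (\<tau> n * measure M {x \<in> space M. \<bar>\<Sum>i = 1..n. X i x\<bar> \<ge> \<epsilon> * a n})) sequentially"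
      proof (intro always_eventually allI)
        fix n
        have [measurable]: "(\<lambda>x. \<Sum>i=1..n. X i x) \<in> borel_measurable M" by (rule Sm)
        let ?P = "measure M {x \<in> space M. \<bar>\<Sum>i = 1..n. X i x\<bar> \<ge> \<epsilon> * a n}"
        have Pev: "{x \<in> space M. \<bar>\<Sum>i = 1..n. X i x\<bar> \<ge> \<epsilon> * a n} \<in> events" by measurable
        show "norm (if n \<ge> 1 \<and> \<bar>\<mu> n\<bar> > \<epsilon> * a n then \<tau> n else 0) \<le> 2 * (\<tau> n * ?P)"
        proof (cases "n \<ge> 1 \<and> \<bar>\<mu> n\<bar> > \<epsilon> * a n")
          case True
          have "?P \<ge> 1/2"
          proof (cases "\<mu> n \<ge> 0")
            case True
            have "measure M {x \<in> space M. (\<Sum>i = 1..n. X i x) \<ge> \<mu> n} \<le> ?P"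
              by (rule finite_measure_mono[OF _ Pev]) (use True \<open>n \<ge> 1 \<and> \<bar>\<mu> n\<bar> > \<epsilon> * a n\<close> in auto)
            then show ?thesis using med[of n] unfolding is_median_def by linarith
          next
            case False
            have "measure M {x \<in> space M. (\<Sum>i = 1..n. X i x) \<le> \<mu> n} \<le> ?P"
              by (rule finite_measure_mono[OF _ Pev]) (use False \<open>n \<ge> 1 \<and> \<bar>\<mu> n\<bar> > \<epsilon> * a n\<close> in auto)
            then show ?thesis using med[of n] unfolding is_median_def by linarith
          qed
          then have "\<tau> n * 1 \<le> \<tau> n * (2 * ?P)"
            by (intro mult_left_mono) (use tau_nonneg[of n] in auto)
          then show ?thesis using True tau_nonneg[of n] by simp
        next
          case False
          have "0 \<le> \<tau> n * ?P" using tau_nonneg[of n] by simp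
          then show ?thesis by (subst if_not_P[OF False]) simp
        qed
      qed
    qed
  qed
  obtain m0 where m0: "m0 \<ge> 0" "prob {x\<in>space M. \<bar>X 1 x\<bar> \<le> m0} \<ge> 1/2"
    using bounded_half[OF Xm[of 1]] by auto
  have part2: "\<forall>\<epsilon>>0. summable (\<lambda>n. real n * \<tau> n * measure M {x \<in> space M. \<bar>X 1 x\<bar> \<ge> \<epsilon> * a n})"
  proof (intro allI impI)
    fix \<epsilon> :: real assume \<epsilon>: "\<epsilon> > 0"
    have [measurable]: "X 1 \<in> borel_measurable M" using Xm by auto
    define c where "c n = prob {x\<in>space M. \<bar>X 1 x\<bar> \<ge> \<epsilon> * a (max n 1)}" for n
    have c_nonneg: "\<forall>n. c n \<ge> 0" by (simp add: c_def)
    have c_anti: "antimono c"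
      unfolding antimono_def
    proof (intro allI impI)
      fix x y :: nat assume "x \<le> y"
      then have "a (max x 1) \<le> a (max y 1)" by (intro a_mono) auto
      then have "\<epsilon> * a (max x 1) \<le> \<epsilon> * a (max y 1)" using \<epsilon> by simp
      moreover have "{z\<in>space M. \<bar>X 1 z\<bar> \<ge> \<epsilon> * a (max x 1)} \<in> events" by measurable
      ultimately show "c y \<le> c x" unfolding c_def
        by (intro finite_measure_mono) auto
    qed
    have ev: "eventually (\<lambda>n. n \<ge> 1 \<and> a n \<ge> 3 * m0 / \<epsilon>) sequentially"
      using eventually_ge_at_top[of 1] a_inf[unfolded filterlim_at_top, rule_format, of "3 * m0 / \<epsilon>"]
      by (rule eventually_conj)
    have sum1: "summable (\<lambda>n. \<tau> n * min (real n * c n) 1)"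
    proof (rule summable_comparison_test_ev[OF _ summable_mult[OF hyp[of "\<epsilon>/3"], of 12]])
      show "eventually (\<lambda>n. norm (\<tau> n * min (real n * c n) 1) \<le>
         12 * (\<tau> n * measure M {x \<in> space M. \<bar>\<Sum>i = 1..n. X i x\<bar> \<ge> \<epsilon> / 3 * a n})) sequentially"
        using ev
      proof (rule eventually_mono)
        fix n assume n: "n \<ge> 1 \<and> a n \<ge> 3 * m0 / \<epsilon>"
        have mt: "m0 \<le> \<epsilon> / 3 * a n" using n \<epsilon> by (simp add: field_simps)
        have "c n = prob {x\<in>space M. \<bar>X 1 x\<bar> \<ge> 3 * (\<epsilon> / 3 * a n)}"
          using n unfolding c_def by (simp add: max_absorb1)
        then have k: "min (real n * c n) 1 \<le> 12 * measure M {x \<in> space M. \<bar>\<Sum>i = 1..n. X i x\<bar> \<ge> \<epsilon> / 3 * a n}"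
          using key[OF indep ident m0(2) mt] by simp
        have "min (real n * c n) 1 \<ge> 0" using c_nonneg by simp
        then show "norm (\<tau> n * min (real n * c n) 1) \<le>
         12 * (\<tau> n * measure M {x \<in> space M. \<bar>\<Sum>i = 1..n. X i x\<bar> \<ge> \<epsilon> / 3 * a n})"
          using mult_left_mono[OF k tau_nonneg[of n]] tau_nonneg[of n] by (simp add: algebra_simps)
      qed
    qed (use \<epsilon> in simp)
    from tau_A c_nonneg c_anti sum1 have s: "summable (\<lambda>n. \<tau> n * (real n * c n))"
      unfolding condition_A_def by blast
    have "eventually (\<lambda>n. \<tau> n * (real n * c n) = real n * \<tau> n * measure M {x \<in> space M. \<bar>X 1 x\<bar> \<ge> \<epsilon> * a n}) sequentially"
      using eventually_ge_at_top[of 1] by (rule eventually_mono) (simp add: c_def max_absorb1)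
    then show "summable (\<lambda>n. real n * \<tau> n * measure M {x \<in> space M. \<bar>X 1 x\<bar> \<ge> \<epsilon> * a n})"
      by (rule summable_cong[THEN iffD1, OF _ s])
  qed
  show ?thesis using part1 part2 med by blast
qed

end
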